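(* Fix $n\ge1$ and let $N\to\infty$, where $h=h(N)>0$ and $\vec J=\vec J(N)=(J_1,\dots,J_n)$ with $J_i>0$ may depend on $N$. Suppose that, for every $N$, $J_1\ge J_2\ge\dots\ge J_n$, and that assumptions (A1) and (A3) (stated in the context) hold. Then $$\Gamma^\star=\big[1+o_N(1)\big]\,\frac14\,(J_{\hat m+1})^{-1}\Big(\sum_{i=\hat m+1}^nJ_iN^i-h\Big)^2,\qquad N\to\infty .$$
   Context: Hierarchical lattice $\Lambda_N^n=\{1,\dots,N^n\}$; $k$-blocks are the sets $\{jN^k+1,\dots,(j+1)N^k\}$; $d(a,b)$ is the smallest $k\ge0$ such that $a,b$ lie in a common $k$-block. Configurations $\sigma\in\{-1,+1\}^{\Lambda_N^n}$, $\boxminus\equiv-1$, $\boxplus\equiv+1$. Hamiltonian $\mathcal H(\sigma)=-\frac12\sum_{\{v,w\},v\ne w}J_{d(v,w)}\sigma(v)\sigma(w)-\frac h2\sum_v\sigma(v)$ (sum over unordered pairs), so $\mathcal H(\sigma)-\mathcal H(\boxminus)=\sum_{v:\sigma(v)=+1,\,w:\sigma(w)=-1}J_{d(v,w)}-h\,|\{v:\sigma(v)=+1\}|$. Paths consist of single spin flips; $\Phi(\sigma,\eta)=\min_{\text{paths }\sigma\to\eta}\max_{\xi\in\text{path}}\mathcal H(\xi)$ and $\Gamma^\star=\Phi(\boxminus,\boxplus)-\mathcal H(\boxminus)$. Define $\hat m=\max\{0\le m\le n-1:(1-\frac1N)\sum_{i=m+1}^nJ_iN^i>h\}$ and $\hat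 s=\frac N2(J_{\hat m+1}N^{\hat m+1})^{-1}\big[(1-\frac1N)\sum_{i=\hat m+1}^nJ_iN^i-h\big]$. (A1): $(1-\frac1N)\sum_{i=1}^nJ_iN^i>h$. (A3): for all $1\le k\le N^{\hat m}$ with $N$-ary decomposition $k=a_{\hat m-1}N^{\hat m-1}+\dots+a_0$ ($0\le a_j\le N-1$), $$\lim_{N\to\infty}\frac{\sum_{i=0}^{\hat m-1}J_{i+1}N^i\Big[(N-a_i-1)\big(\sum_{j=0}^ia_jN^j\big)+a_i\big(N^i-\sum_{j=0}^{i-1}a_jN^j\big)\Big]+k\sum_{i=\hat m+1}^nJ_iN^i}{\lceil\hat s\rceil(2\hat s-\lceil\hat s\rceil+1)J_{\hat m+1}N^{2\hat m}}=0.$$ *)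

theory Defs
  imports "HOL-Analysis.Analysis"
begin

definition lattice :: "nat \<Rightarrow> nat \<Rightarrow> nat set" where
  "lattice N n = {1..N ^ n}"

text \<open>a and b lie in a common k-block {j N^k + 1, ..., (j+1) N^k}.\<close>
definition same_block :: "nat \<Rightarrow> nat \<Rightarrow> nat \<Rightarrow> nat \<Rightarrow> bool" where
  "same_block N k a b \<longleftrightarrow> (a - 1) div N ^ k = (b - 1) div N ^ k"

definition hdist :: "nat \<Rightarrow> nat \<Rightarrow> nat \<Rightarrow> nat" where
  "hdist N a b = (LEAST k. same_block N k a b)"

definition configs :: "nat \<Rightarrow> nat \<Rightarrow> (nat \<Rightarrow> int) set" where
  "configs N n = {\<sigma>. (\<forall>v\<in>lattice N n. \<sigma> v = 1 \<or> \<sigma> v = -1) \<and> (\<forall>v. v \<notin> lattice N n \<longrightarrow> \<sigma> v = -1)}"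

definition all_minus :: "nat \<Rightarrow> int" where
  "all_minus = (\<lambda>v. -1)"

definition all_plus :: "nat \<Rightarrow> nat \<Rightarrow> nat \<Rightarrow> int" where
  "all_plus N n = (\<lambda>v. if v \<in> lattice N n then 1 else -1)"

definition hamiltonian :: "nat \<Rightarrow> nat \<Rightarrow> (nat \<Rightarrow> real) \<Rightarrow> real \<Rightarrow> (nat \<Rightarrow> int) \<Rightarrow> real" where
  "hamiltonian N n J h \<sigma> =
     - (1/2) * (\<Sum>(v,w) \<in> {(v,w). v \<in> lattice N n \<and> w \<in> lattice N n \<and> v < w}.
                   J (hdist N v w) * of_int (\<sigma> v) * of_int (\<sigma> w))
     - (h/2) * (\<Sum>v \<in> lattice N n. of_int (\<sigma> v))"

definition flip :: "(nat \<Rightarrow> int) \<Rightarrow> nat \<Rightarrow> nat \<Rightarrow> int" where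
  "flip \<sigma> v = \<sigma>(v := - \<sigma> v)"

definition is_path :: "nat \<Rightarrow> nat \<Rightarrow> (nat \<Rightarrow> int) \<Rightarrow> (nat \<Rightarrow> int) \<Rightarrow> (nat \<Rightarrow> int) list \<Rightarrow> bool" where
  "is_path N n \<sigma> \<eta> p \<longleftrightarrow> p \<noteq> [] \<and> hd p = \<sigma> \<and> last p = \<eta> \<and> set p \<subseteq> configs N n \<and>
     (\<forall>i. Suc i < length p \<longrightarrow> (\<exists>v \<in> lattice N n. p ! Suc i = flip (p ! i) v))"

definition comm_height :: "nat \<Rightarrow> nat \<Rightarrow> (nat \<Rightarrow> real) \<Rightarrow> real \<Rightarrow> (nat \<Rightarrow> int) \<Rightarrow> (nat \<Rightarrow> int) \<Rightarrow> real" where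
  "comm_height N n J h \<sigma> \<eta> =
     (INF p \<in> {p. is_path N n \<sigma> \<eta> p}. Max (hamiltonian N n J h ` set p))"

definition Gamma_star :: "nat \<Rightarrow> nat \<Rightarrow> (nat \<Rightarrow> real) \<Rightarrow> real \<Rightarrow> real" where
  "Gamma_star N n J h =
     comm_height N n J h all_minus (all_plus N n) - hamiltonian N n J h all_minus"

definition m_hat :: "nat \<Rightarrow> nat \<Rightarrow> (nat \<Rightarrow> real) \<Rightarrow> real \<Rightarrow> nat" where
  "m_hat N n J h = Max {m. m \<le> n - 1 \<and>
      (1 - 1 / real N) * (\<Sum>i = m+1..n. J i * real N ^ i) > h}"

definition s_hat :: "nat \<Rightarrow> nat \<Rightarrow> (nat \<Rightarrow> real) \<Rightarrow> real \<Rightarrow> real" where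
  "s_hat N n J h = (let m = m_hat N n J h in
      (real N / 2) * inverse (J (m+1) * real N ^ (m+1)) *
      ((1 - 1 / real N) * (\<Sum>i = m+1..n. J i * real N ^ i) - h))"

definition digit :: "nat \<Rightarrow> nat \<Rightarrow> nat \<Rightarrow> nat" where
  "digit N k j = (k div N ^ j) mod N"

definition A3_ratio :: "nat \<Rightarrow> nat \<Rightarrow> (nat \<Rightarrow> real) \<Rightarrow> real \<Rightarrow> nat \<Rightarrow> real" where
  "A3_ratio N n J h k = (let m = m_hat N n J h; s = s_hat N n J h; a = digit N k; NN = real N in
     ((\<Sum>i<m. J (i+1) * NN ^ i *
          ((NN - real (a i) - 1) * (\<Sum>j\<le>i. real (a j) * NN ^ j)
           + real (a i) * (NN ^ i - (\<Sum>j<i. real (a j) * NN ^ j))))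
      + real k * (\<Sum>i = m+1..n. J i * NN ^ i))
     / (of_int \<lceil>s\<rceil> * (2 * s - of_int \<lceil>s\<rceil> + 1) * J (m+1) * NN ^ (2*m)))"

end

theory Submission
  imports Defs
begin


lemma blk_iff:
  fixes M c w :: nat
  assumes "M > 0" "1 \<le> w"
  shows "((w-1) div M = c) \<longleftrightarrow> (c*M+1 \<le> w \<and> w \<le> (c+1)*M)"
proof
  assume h: "(w-1) div M = c"
  define q where "q = (w-1) div M"
  have a: "M * q \<le> w-1" unfolding q_def by simp
  have b: "w - 1 < M * q + M"
    unfolding q_def using assms(1) by (metis add.commute mod_less_divisor mult_div_mod_eq nat_add_left_cancel_less)
  have "q = c" using h q_def by simp
  with a b assms(2) show "c*M+1 \<le> w \<and> w \<le> (c+1)*M" by (simp add: algebra_simps; linarith)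
next
  assume h: "c*M+1 \<le> w \<and> w \<le> (c+1)*M"
  show "(w-1) div M = c"
    by (rule div_nat_eqI) (use h assms in \<open>auto simp: algebra_simps\<close>)
qed

lemma same_block_mono:
  assumes "same_block N k a b" "k \<le> k'"
  shows "same_block N k' a b"
proof -
  obtain d where d: "k' = k + d" using assms(2) le_Suc_ex by blast
  have "(a-1) div N^k' = ((a-1) div N^k) div N^d" for a
    by (simp add: d power_add div_mult2_eq)
  thus ?thesis using assms(1) unfolding same_block_def by metis
qed

lemma same_block_top:
  assumes "a \<in> lattice N n" "b \<in> lattice N n"
  shows "same_block N n a b"
  using assms unfolding same_block_def lattice_def by auto

lemma same_block_sym: "same_block N k a b = same_block N k b a"
  unfolding same_block_def by auto

lemma hdist_sym: "hdist N a b = hdist N b a"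
  unfolding hdist_def using same_block_sym by metis

lemma hdist_le_iff:
  assumes "a \<in> lattice N n" "b \<in> lattice N n"
  shows "hdist N a b \<le> i \<longleftrightarrow> same_block N i a b"
proof
  assume "hdist N a b \<le> i"
  moreover have "same_block N (hdist N a b) a b"
    unfolding hdist_def by (rule LeastI[of _ n]) (rule same_block_top[OF assms])
  ultimately show "same_block N i a b" using same_block_mono by blast
next
  assume "same_block N i a b" thus "hdist N a b \<le> i" unfolding hdist_def by (rule Least_le)
qed

lemma hdist_le_n:
  assumes "a \<in> lattice N n" "b \<in> lattice N n"
  shows "hdist N a b \<le> n"
  using hdist_le_iff[OF assms] same_block_top[OF assms] by blast

lemma hdist_pos:
  assumes "a \<in> lattice N n" "b \<in> lattice N n" "a \<noteq> b"
  shows "1 \<le> hdist N a b"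
proof (rule ccontr)
  assume "\<not> 1 \<le> hdist N a b"
  hence "hdist N a b \<le> 0" by simp
  hence "same_block N 0 a b" using hdist_le_iff[OF assms(1,2)] by blast
  thus False using assms unfolding same_block_def lattice_def by auto
qed

lemma hdist_self: "hdist N a a = 0"
  unfolding hdist_def same_block_def by simp

lemma block_set:
  assumes "N \<ge> 1" "v \<in> lattice N n" "i \<le> n"
  shows "{w \<in> lattice N n. same_block N i v w} =
         {((v-1) div N^i)*N^i+1 .. ((v-1) div N^i + 1)*N^i}"
proof -
  let ?M = "N^i" let ?c = "(v-1) div N^i"
  have M: "?M > 0" using assms by simp
  have v1: "1 \<le> v" "v \<le> N^n" using assms unfolding lattice_def by auto
  have "N^n = ?M * N^(n-i)" using assms(3) by (simp flip: power_add)
  have "v - 1 < N^(n-i) * ?M" using v1 \<open>N^n = ?M * N^(n-i)\<close> by (simp add: mult.commute)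
  hence "?c < N^(n-i)" by (rule less_mult_imp_div_less)
  hence "?c + 1 \<le> N^(n-i)" by simp
  hence top: "(?c+1)*?M \<le> N^n" using \<open>N^n = ?M * N^(n-i)\<close>
    by (metis mult.commute mult_le_mono1)
  show ?thesis
  proof (intro set_eqI iffI)
    fix w assume "w \<in> {w \<in> lattice N n. same_block N i v w}"
    hence "1 \<le> w" "(w-1) div ?M = ?c" unfolding lattice_def same_block_def by auto
    thus "w \<in> {?c*?M+1 .. (?c+1)*?M}" using blk_iff[OF M] by auto
  next
    fix w assume w: "w \<in> {?c*?M+1 .. (?c+1)*?M}"
    hence "1 \<le> w" by auto
    hence "(w-1) div ?M = ?c" using blk_iff[OF M] w by auto
    thus "w \<in> {w \<in> lattice N n. same_block N i v w}"
      using w top \<open>1 \<le> w\<close> unfolding lattice_def same_block_def by auto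
  qed
qed

lemma card_block:
  assumes "N \<ge> 1" "v \<in> lattice N n" "i \<le> n"
  shows "card {w \<in> lattice N n. same_block N i v w} = N^i"
  unfolding block_set[OF assms] by (simp add: algebra_simps)

lemma sum_pairs_lt:
  assumes "finite A"
  shows "(\<Sum>(v,w) \<in> {(v,w). v \<in> A \<and> w \<in> A \<and> v < w}. F v w) =
         (\<Sum>v\<in>A. \<Sum>w\<in>A. if v < w then F v w else 0)"
proof -
  have "{(v,w). v \<in> A \<and> w \<in> A \<and> v < w} = {p \<in> A \<times> A. fst p < snd p}" by auto
  hence "(\<Sum>(v,w) \<in> {(v,w). v \<in> A \<and> w \<in> A \<and> v < w}. F v w) =
         (\<Sum>p\<in>A \<times> A. if fst p < snd p then F (fst p) (snd p) else 0)"
    using assms by (simp add: sum.inter_filter split_def)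
  also have "\<dots> = (\<Sum>v\<in>A. \<Sum>w\<in>A. if v < w then F v w else 0)"
    by (simp add: sum.cartesian_product split_def)
  finally show ?thesis .
qed

lemma sum_sym_lt:
  fixes g :: "nat \<Rightarrow> nat \<Rightarrow> real"
  assumes "finite A" "\<And>v w. g v w = g w v" "\<And>v. g v v = 0"
  shows "(\<Sum>v\<in>A. \<Sum>w\<in>A. g v w) = 2 * (\<Sum>v\<in>A. \<Sum>w\<in>A. if v < w then g v w else 0)"
proof -
  have pt: "g v w = (if v < w then g v w else 0) + (if w < v then g w v else 0)" for v w
    using assms(2,3) by (cases v w rule: linorder_cases) auto
  have "(\<Sum>v\<in>A. \<Sum>w\<in>A. g v w) = (\<Sum>v\<in>A. \<Sum>w\<in>A. if v < w then g v w else 0)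
        + (\<Sum>v\<in>A. \<Sum>w\<in>A. if w < v then g w v else 0)"
    by (subst pt) (simp add: sum.distrib)
  also have "(\<Sum>v\<in>A. \<Sum>w\<in>A. if w < v then g w v else 0) = (\<Sum>v\<in>A. \<Sum>w\<in>A. if v < w then g v w else 0)"
    by (rule sum.swap)
  finally show ?thesis by simp
qed

definition plusset :: "nat \<Rightarrow> nat \<Rightarrow> (nat \<Rightarrow> int) \<Rightarrow> nat set" where
  "plusset N n \<sigma> = {v \<in> lattice N n. \<sigma> v = 1}"

lemma finite_lattice[simp]: "finite (lattice N n)" unfolding lattice_def by simp

lemma energy:
  assumes "\<sigma> \<in> configs N n"
  shows "hamiltonian N n J h \<sigma> - hamiltonian N n J h all_minus =
         (\<Sum>v\<in>plusset N n \<sigma>. \<Sum>w\<in>lattice N n - plusset N n \<sigma>. J (hdist N v w))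
         - h * card (plusset N n \<sigma>)"
proof -
  let ?L = "lattice N n" let ?P = "plusset N n \<sigma>"
  define f where "f v w = J (hdist N v w)" for v w
  define X where "X v w = (if (v \<in> ?P) = (w \<in> ?P) then 0 else 1::real)" for v w
  have fin: "finite ?L" by simp
  have PL: "?P \<subseteq> ?L" unfolding plusset_def by auto
  have sv: "v \<in> ?L \<Longrightarrow> \<sigma> v = 1 \<or> \<sigma> v = -1" for v using assms unfolding configs_def by auto
  have prod: "v \<in> ?L \<Longrightarrow> w \<in> ?L \<Longrightarrow> real_of_int (\<sigma> v) * real_of_int (\<sigma> w) - 1 = -2 * X v w" for v w
    using sv[of v] sv[of w] unfolding X_def plusset_def by auto
  have H1: "hamiltonian N n J h \<sigma> = - (1/2) * (\<Sum>v\<in>?L. \<Sum>w\<in>?L. if v < w then f v w * real_of_int (\<sigma> v) * real_of_int (\<sigma> w) else 0)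
      - (h/2) * (\<Sum>v\<in>?L. real_of_int (\<sigma> v))"
    unfolding hamiltonian_def f_def by (simp add: sum_pairs_lt)
  have H0: "hamiltonian N n J h all_minus = - (1/2) * (\<Sum>v\<in>?L. \<Sum>w\<in>?L. if v < w then f v w else 0)
      - (h/2) * (\<Sum>v\<in>?L. -1)"
    unfolding hamiltonian_def f_def all_minus_def by (simp add: sum_pairs_lt)
  have A: "(\<Sum>v\<in>?L. \<Sum>w\<in>?L. if v < w then f v w * real_of_int (\<sigma> v) * real_of_int (\<sigma> w) else 0)
         - (\<Sum>v\<in>?L. \<Sum>w\<in>?L. if v < w then f v w else 0)
         = -2 * (\<Sum>v\<in>?L. \<Sum>w\<in>?L. if v < w then f v w * X v w else 0)"
  proof -
    have "(\<Sum>v\<in>?L. \<Sum>w\<in>?L. if v < w then f v w * real_of_int (\<sigma> v) * real_of_int (\<sigma> w) else 0)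
         - (\<Sum>v\<in>?L. \<Sum>w\<in>?L. if v < w then f v w else 0)
         = (\<Sum>v\<in>?L. \<Sum>w\<in>?L. if v < w then f v w * (real_of_int (\<sigma> v) * real_of_int (\<sigma> w) - 1) else 0)"
      by (simp add: sum_subtractf[symmetric] algebra_simps if_distrib cong: if_cong)
    also have "\<dots> = (\<Sum>v\<in>?L. \<Sum>w\<in>?L. -2 * (if v < w then f v w * X v w else 0))"
      by (intro sum.cong refl) (simp add: prod)
    also have "\<dots> = -2 * (\<Sum>v\<in>?L. \<Sum>w\<in>?L. if v < w then f v w * X v w else 0)"
      by (simp add: sum_distrib_left)
    finally show ?thesis .
  qed
  have B: "(\<Sum>v\<in>?L. real_of_int (\<sigma> v)) = 2 * real (card ?P) - real (card ?L)"
  proof -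
    have "(\<Sum>v\<in>?L. real_of_int (\<sigma> v)) = (\<Sum>v\<in>?L. 2 * (if v \<in> ?P then 1 else 0) - 1)"
      apply (intro sum.cong refl) subgoal for v using sv[of v] by (auto simp: plusset_def) done
    also have "\<dots> = 2 * real (card ?P) - real (card ?L)"
      using PL by (simp add: sum_subtractf sum_distrib_left[symmetric] sum.If_cases Int_absorb1)
    finally show ?thesis .
  qed
  have fsym: "f v w = f w v" for v w unfolding f_def using hdist_sym by metis
  have C: "2 * (\<Sum>v\<in>?L. \<Sum>w\<in>?L. if v < w then f v w * X v w else 0) = 2 * (\<Sum>v\<in>?P. \<Sum>w\<in>?L - ?P. f v w)"
  proof -
    have "2 * (\<Sum>v\<in>?L. \<Sum>w\<in>?L. if v < w then f v w * X v w else 0) = (\<Sum>v\<in>?L. \<Sum>w\<in>?L. f v w * X v w)"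
      by (rule sum_sym_lt[symmetric]) (auto simp: fsym X_def)
    also have "\<dots> = (\<Sum>v\<in>?L. \<Sum>w\<in>?L. (if v \<in> ?P \<and> w \<notin> ?P then f v w else 0) + (if w \<in> ?P \<and> v \<notin> ?P then f w v else 0))"
      by (intro sum.cong refl) (auto simp: X_def fsym)
    also have "\<dots> = 2 * (\<Sum>v\<in>?L. \<Sum>w\<in>?L. if v \<in> ?P \<and> w \<notin> ?P then f v w else 0)"
    proof -
      have "(\<Sum>v\<in>?L. \<Sum>w\<in>?L. if w \<in> ?P \<and> v \<notin> ?P then f w v else 0)
          = (\<Sum>v\<in>?L. \<Sum>w\<in>?L. if v \<in> ?P \<and> w \<notin> ?P then f v w else 0)"
        by (rule sum.swap)
      thus ?thesis by (simp only: sum.distrib)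
    qed
    also have "(\<Sum>v\<in>?L. \<Sum>w\<in>?L. if v \<in> ?P \<and> w \<notin> ?P then f v w else 0) = (\<Sum>v\<in>?P. \<Sum>w\<in>?L - ?P. f v w)"
    proof -
      have "(\<Sum>v\<in>?L. \<Sum>w\<in>?L. if v \<in> ?P \<and> w \<notin> ?P then f v w else 0)
          = (\<Sum>v\<in>?L. if v \<in> ?P then (\<Sum>w\<in>?L - ?P. f v w) else 0)"
        by (intro sum.cong refl) (auto simp: sum.If_cases Diff_eq Compl_eq)
      also have "\<dots> = (\<Sum>v\<in>?P. \<Sum>w\<in>?L - ?P. f v w)"
        using PL by (simp add: sum.If_cases Int_absorb1)
      finally show ?thesis .
    qed
    finally show ?thesis by simp
  qed
  have "hamiltonian N n J h \<sigma> - hamiltonian N n J h all_minus =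
      - (1/2) * (-2 * (\<Sum>v\<in>?L. \<Sum>w\<in>?L. if v < w then f v w * X v w else 0))
      - (h/2) * ((\<Sum>v\<in>?L. real_of_int (\<sigma> v)) + card ?L)"
    unfolding H1 H0 using A by (simp add: algebra_simps)
  also have "\<dots> = (\<Sum>v\<in>?P. \<Sum>w\<in>?L - ?P. f v w) - h * card ?P"
    using C B by (simp add: algebra_simps)
  finally show ?thesis unfolding f_def .
qed

lemma sum_level:
  fixes g :: "nat \<Rightarrow> real"
  assumes "finite A" "\<forall>a\<in>A. d a \<in> {1..n}"
  shows "(\<Sum>a\<in>A. g (d a)) = (\<Sum>l=1..n. g l * real (card {a\<in>A. d a = l}))"
proof -
  have "(\<Sum>a\<in>A. g (d a)) = (\<Sum>l\<in>{1..n}. \<Sum>a\<in>{a\<in>A. d a = l}. g (d a))"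
    by (rule sum.group[symmetric]) (use assms in auto)
  also have "\<dots> = (\<Sum>l=1..n. g l * real (card {a\<in>A. d a = l}))"
    by (intro sum.cong refl) simp
  finally show ?thesis .
qed

lemma card_level:
  assumes "finite A" "1 \<le> l"
  shows "real (card {a\<in>A. d a = (l::nat)}) = real (card {a\<in>A. d a \<le> l}) - real (card {a\<in>A. d a \<le> l - 1})"
proof -
  have e: "{a\<in>A. d a = l} = {a\<in>A. d a \<le> l} - {a\<in>A. d a \<le> l - 1}" using assms(2) by auto
  have sub: "{a\<in>A. d a \<le> l - 1} \<subseteq> {a\<in>A. d a \<le> l}" by auto
  have "card {a\<in>A. d a = l} = card {a\<in>A. d a \<le> l} - card {a\<in>A. d a \<le> l - 1}"
    unfolding e by (rule card_Diff_subset) (use assms sub in auto)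
  moreover have "card {a\<in>A. d a \<le> l - 1} \<le> card {a\<in>A. d a \<le> l}"
    by (rule card_mono) (use assms sub in auto)
  ultimately show ?thesis by simp
qed

lemma telesc_pow:
  fixes N :: real
  shows "(\<Sum>l=1..m. N^l - N^(l-1)) = N^m - 1"
  by (induction m) (auto simp: sum.cl_ivl_Suc)

lemma card_ball_minus:
  assumes "N \<ge> 1" "v \<in> lattice N n" "l \<le> n"
  shows "real (card {w\<in>lattice N n - {v}. hdist N v w \<le> l}) = real N ^ l - 1"
proof -
  have "{w\<in>lattice N n - {v}. hdist N v w \<le> l} = {w\<in>lattice N n. same_block N l v w} - {v}"
    using hdist_le_iff[OF assms(2)] by auto
  moreover have "v \<in> {w\<in>lattice N n. same_block N l v w}"
    using assms(2) unfolding same_block_def by auto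
  moreover have "finite {w\<in>lattice N n. same_block N l v w}" by simp
  ultimately have "card {w\<in>lattice N n - {v}. hdist N v w \<le> l} = N^l - 1"
    using card_block[OF assms] by (simp add: card_Diff_singleton)
  moreover have "N^l \<ge> 1" using assms(1) by simp
  ultimately show ?thesis by (simp add: of_nat_diff)
qed

lemma row_lower:
  fixes J :: "nat \<Rightarrow> real"
  assumes N2: "N \<ge> 2" and Jpos: "\<forall>i\<in>{1..n}. J i > 0"
    and Jmono: "\<forall>i j. 1 \<le> i \<longrightarrow> i \<le> j \<longrightarrow> j \<le> n \<longrightarrow> J j \<le> J i"
    and PL: "P \<subseteq> lattice N n" and vP: "v \<in> P" and mn: "m + 1 \<le> n"
  shows "(\<Sum>w\<in>lattice N n - P. J (hdist N v w)) \<ge>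
         (1 - 1/real N) * (\<Sum>i=m+1..n. J i * real N^i) + J (m+1) * real N^m - real (card P) * J (m+1)"
proof -
  let ?L = "lattice N n"
  define K where "K l = J (max l (m+1))" for l
  have vL: "v \<in> ?L" using PL vP by auto
  have dr: "w \<in> ?L - {v} \<Longrightarrow> hdist N v w \<in> {1..n}" for w
    using hdist_pos[OF vL, of w] hdist_le_n[OF vL, of w] by auto
  have KJ: "w \<in> ?L - {v} \<Longrightarrow> K (hdist N v w) \<le> J (hdist N v w)" for w
    using dr[of w] Jmono mn unfolding K_def by (auto simp: max_def)
  have Kle: "w \<in> ?L - {v} \<Longrightarrow> K (hdist N v w) \<le> J (m+1)" for w
    using dr[of w] Jmono mn unfolding K_def by (auto simp: max_def)
  have finP: "finite P" using PL finite_lattice finite_subset by blast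
  have a: "(\<Sum>w\<in>?L - P. K (hdist N v w)) \<le> (\<Sum>w\<in>?L - P. J (hdist N v w))"
    by (rule sum_mono) (use KJ vP in auto)
  have b: "(\<Sum>w\<in>?L - {v}. K (hdist N v w)) = (\<Sum>w\<in>?L - P. K (hdist N v w)) + (\<Sum>w\<in>P - {v}. K (hdist N v w))"
  proof -
    have "?L - {v} = (?L - P) \<union> (P - {v})" using PL vP by auto
    thus ?thesis by (simp only:) (rule sum.union_disjoint, use finP in auto)
  qed
  have c: "(\<Sum>w\<in>P - {v}. K (hdist N v w)) \<le> (real (card P) - 1) * J (m+1)"
  proof -
    have "(\<Sum>w\<in>P - {v}. K (hdist N v w)) \<le> (\<Sum>w\<in>P - {v}. J (m+1))"
      by (rule sum_mono) (use Kle PL in auto)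
    also have "\<dots> = (real (card P) - 1) * J (m+1)"
      using vP finP by (simp add: card_Diff_singleton of_nat_diff card_gt_0_iff[symmetric]; metis card_0_eq empty_iff One_nat_def Suc_leI neq0_conv of_nat_1 of_nat_diff)
    finally show ?thesis .
  qed
  have d: "(\<Sum>w\<in>?L - {v}. K (hdist N v w)) = (\<Sum>l=1..n. K l * (real N^l - real N^(l-1)))"
  proof -
    have "(\<Sum>w\<in>?L - {v}. K (hdist N v w)) = (\<Sum>l=1..n. K l * real (card {w\<in>?L - {v}. hdist N v w = l}))"
      by (rule sum_level) (use dr in auto)
    also have "\<dots> = (\<Sum>l=1..n. K l * (real N^l - real N^(l-1)))"
    proof (intro sum.cong refl)
      fix l assume l: "l \<in> {1..n}"
      have "real (card {w\<in>?L - {v}. hdist N v w = l}) = real N^l - 1 - (real N^(l-1) - 1)"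
        using card_level[of "?L - {v}" l "hdist N v"] card_ball_minus[of N v n l] card_ball_minus[of N v n "l-1"] l vL N2 by auto
      thus "K l * real (card {w\<in>?L - {v}. hdist N v w = l}) = K l * (real N^l - real N^(l-1))" by simp
    qed
    finally show ?thesis .
  qed
  have e: "(\<Sum>l=1..n. K l * (real N^l - real N^(l-1))) = J (m+1) * (real N^m - 1) + (1 - 1/real N) * (\<Sum>i=m+1..n. J i * real N^i)"
  proof -
    have sp: "{1..n} = {1..m} \<union> {m+1..n}" using mn by auto
    have "(\<Sum>l=1..n. K l * (real N^l - real N^(l-1))) = (\<Sum>l=1..m. K l * (real N^l - real N^(l-1))) + (\<Sum>l=m+1..n. K l * (real N^l - real N^(l-1)))"
      unfolding sp by (rule sum.union_disjoint) auto
    also have "(\<Sum>l=1..m. K l * (real N^l - real N^(l-1))) = J (m+1) * (real N^m - 1)"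
    proof -
      have "(\<Sum>l=1..m. K l * (real N^l - real N^(l-1))) = (\<Sum>l=1..m. J (m+1) * (real N^l - real N^(l-1)))"
        by (intro sum.cong refl) (auto simp: K_def max_def)
      thus ?thesis using telesc_pow[of "real N" m] by (simp add: sum_distrib_left[symmetric])
    qed
    also have "(\<Sum>l=m+1..n. K l * (real N^l - real N^(l-1))) = (\<Sum>l=m+1..n. (1 - 1/real N) * (J l * real N^l))"
    proof (intro sum.cong refl)
      fix l assume l: "l \<in> {m+1..n}"
      then obtain k where k: "l = Suc k" by (cases l) auto
      have "real N^l - real N^(l-1) = (1 - 1/real N) * real N^l" using N2 k by (simp add: field_simps)
      moreover have "K l = J l" using l unfolding K_def by (simp add: max_absorb1)
      ultimately show "K l * (real N^l - real N^(l-1)) = (1 - 1/real N) * (J l * real N^l)" by simp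
    qed
    also have "\<dots> = (1 - 1/real N) * (\<Sum>i=m+1..n. J i * real N^i)" by (simp add: sum_distrib_left)
    finally show ?thesis .
  qed
  show ?thesis using a b c d e by (simp add: algebra_simps)
qed

lemma discrete_ivt:
  fixes f :: "nat \<Rightarrow> nat"
  assumes "f 0 \<le> x" "x \<le> f L" "\<forall>i<L. f (Suc i) \<le> f i + 1"
  shows "\<exists>i\<le>L. f i = x"
  using assms
proof (induction L)
  case 0 thus ?case by auto
next
  case (Suc L)
  show ?case
  proof (cases "x \<le> f L")
    case True
    have "\<forall>i<L. f (Suc i) \<le> f i + 1" using Suc.prems(3) by simp
    then obtain i where "i \<le> L" "f i = x" using Suc.IH Suc.prems(1) True by blast
    thus ?thesis by (intro exI[of _ i]) simp
  next
    case False
    have "f (Suc L) \<le> f L + 1" using Suc.prems(3) by simp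
    hence "f (Suc L) = x" using Suc.prems(2) False by linarith
    thus ?thesis by auto
  qed
qed

lemma card_lattice[simp]: "card (lattice N n) = N^n" unfolding lattice_def by simp

lemma plusset_minus[simp]: "plusset N n all_minus = {}" unfolding plusset_def all_minus_def by auto
lemma plusset_plus[simp]: "plusset N n (all_plus N n) = lattice N n" unfolding plusset_def all_plus_def by auto

lemma plusset_flip: "plusset N n (flip \<sigma> v) \<subseteq> insert v (plusset N n \<sigma>)"
  unfolding plusset_def flip_def by auto

lemma path_hits:
  assumes "is_path N n all_minus (all_plus N n) p" "x \<le> N^n"
  shows "\<exists>\<sigma>\<in>set p. card (plusset N n \<sigma>) = x"
proof -
  define f where "f i = card (plusset N n (p ! i))" for i
  define L where "L = length p - 1"
  have ne: "p \<noteq> []" and hd: "hd p = all_minus" and la: "last p = all_plus N n"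
    using assms(1) unfolding is_path_def by auto
  have Lp: "L < length p" using ne unfolding L_def by simp
  have f0: "f 0 = 0" unfolding f_def using hd ne by (simp add: hd_conv_nth)
  have fL: "f L = N^n" unfolding f_def L_def using la ne by (simp add: last_conv_nth)
  have st: "\<forall>i<L. f (Suc i) \<le> f i + 1"
  proof (intro allI impI)
    fix i assume "i < L"
    hence "Suc i < length p" unfolding L_def by simp
    then obtain v where "p ! Suc i = flip (p ! i) v" using assms(1) unfolding is_path_def by blast
    hence "plusset N n (p ! Suc i) \<subseteq> insert v (plusset N n (p ! i))" using plusset_flip by simp
    moreover have "finite (insert v (plusset N n (p ! i)))" unfolding plusset_def by simp
    ultimately have "f (Suc i) \<le> card (insert v (plusset N n (p ! i)))" unfolding f_def by (rule card_mono[rotated])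
    also have "\<dots> \<le> f i + 1" unfolding f_def by (simp add: card_insert_le_m1 card_insert_if)
    finally show "f (Suc i) \<le> f i + 1" .
  qed
  obtain i where "i \<le> L" "f i = x" using discrete_ivt[of f x L] f0 fL st assms(2) by auto
  thus ?thesis using Lp unfolding f_def by (metis le_less_trans nth_mem)
qed

definition sig :: "nat \<Rightarrow> nat \<Rightarrow> int" where
  "sig x = (\<lambda>v. if 1 \<le> v \<and> v \<le> x then 1 else -1)"

definition stdpath :: "nat \<Rightarrow> nat \<Rightarrow> (nat \<Rightarrow> int) list" where
  "stdpath N n = map sig [0..<N^n+1]"

lemma sig_configs: "x \<le> N^n \<Longrightarrow> sig x \<in> configs N n"
  unfolding sig_def configs_def lattice_def by auto

lemma stdpath_ok: "is_path N n all_minus (all_plus N n) (stdpath N n)"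
proof -
  have hd: "sig 0 = all_minus" unfolding sig_def all_minus_def by auto
  have la: "sig (N^n) = all_plus N n" unfolding sig_def all_plus_def lattice_def by auto
  have fl: "sig (Suc i) = flip (sig i) (Suc i)" for i
    unfolding sig_def flip_def by (auto simp: fun_eq_iff)
  show ?thesis unfolding is_path_def stdpath_def
  proof (intro conjI allI impI)
    show "hd (map sig [0..<N^n+1]) = all_minus" using hd by (simp add: hd_map hd_upt del: upt_Suc)
    show "last (map sig [0..<N^n+1]) = all_plus N n" using la by (simp add: last_map del: upt_Suc)
    show "set (map sig [0..<N^n+1]) \<subseteq> configs N n" using sig_configs by (auto simp del: upt_Suc)
    fix i assume "Suc i < length (map sig [0..<N^n+1])"
    hence i: "Suc i \<le> N^n" by simp
    have "map sig [0..<N^n+1] ! Suc i = flip (map sig [0..<N^n+1] ! i) (Suc i)"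
      using i by (simp add: fl nth_map_upt del: upt_Suc) 
    moreover have "Suc i \<in> lattice N n" using i unfolding lattice_def by auto
    ultimately show "\<exists>v\<in>lattice N n. map sig [0..<N^n+1] ! Suc i = flip (map sig [0..<N^n+1] ! i) v" by blast
  qed (simp del: upt_Suc)
qed

lemma Gamma_ge:
  assumes "x0 \<le> N^n"
    and "\<And>\<sigma>. \<sigma> \<in> configs N n \<Longrightarrow> card (plusset N n \<sigma>) = x0 \<Longrightarrow>
            hamiltonian N n J h \<sigma> - hamiltonian N n J h all_minus \<ge> c"
  shows "Gamma_star N n J h \<ge> c"
proof -
  let ?H = "hamiltonian N n J h"
  have "comm_height N n J h all_minus (all_plus N n) \<ge> ?H all_minus + c"
    unfolding comm_height_def
  proof (rule cINF_greatest)
    show "{p. is_path N n all_minus (all_plus N n) p} \<noteq> {}" using stdpath_ok by blast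
    fix p assume "p \<in> {p. is_path N n all_minus (all_plus N n) p}"
    hence p: "is_path N n all_minus (all_plus N n) p" by simp
    obtain \<sigma> where s: "\<sigma> \<in> set p" "card (plusset N n \<sigma>) = x0" using path_hits[OF p assms(1)] by blast
    have "\<sigma> \<in> configs N n" using s p unfolding is_path_def by auto
    hence "?H all_minus + c \<le> ?H \<sigma>" using assms(2) s by force
    also have "?H \<sigma> \<le> Max (?H ` set p)" using s by (intro Max_ge) auto
    finally show "?H all_minus + c \<le> Max (?H ` set p)" .
  qed
  thus ?thesis unfolding Gamma_star_def by simp
qed

lemma Gamma_le:
  assumes "\<And>x. x \<le> N^n \<Longrightarrow> hamiltonian N n J h (sig x) - hamiltonian N n J h all_minus \<le> c"
  shows "Gamma_star N n J h \<le> c"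
proof -
  let ?H = "hamiltonian N n J h"
  have "comm_height N n J h all_minus (all_plus N n) \<le> Max (?H ` set (stdpath N n))"
    unfolding comm_height_def
  proof (rule cINF_lower)
    show "stdpath N n \<in> {p. is_path N n all_minus (all_plus N n) p}" using stdpath_ok by blast
    show "bdd_below ((\<lambda>p. Max (?H ` set p)) ` {p. is_path N n all_minus (all_plus N n) p})"
    proof (rule bdd_belowI[of _ "?H all_minus"])
      fix y assume "y \<in> (\<lambda>p. Max (?H ` set p)) ` {p. is_path N n all_minus (all_plus N n) p}"
      then obtain p where p: "is_path N n all_minus (all_plus N n) p" "y = Max (?H ` set p)" by auto
      have "all_minus \<in> set p" using p(1) unfolding is_path_def by (metis hd_in_set)
      thus "?H all_minus \<le> y" unfolding p(2) by (intro Max_ge) auto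
    qed
  qed
  also have "\<dots> \<le> ?H all_minus + c"
  proof -
    have "set (stdpath N n) = sig ` {0..N^n}" unfolding stdpath_def by (auto simp del: upt_Suc)
    moreover have "\<And>x. x \<le> N^n \<Longrightarrow> ?H (sig x) \<le> ?H all_minus + c" using assms by force
    ultimately show ?thesis by (auto simp: Max_le_iff)
  qed
  finally show ?thesis unfolding Gamma_star_def by simp
qed

lemma energy_lower:
  fixes J :: "nat \<Rightarrow> real"
  assumes N2: "N \<ge> 2" and Jpos: "\<forall>i\<in>{1..n}. J i > 0"
    and Jmono: "\<forall>i j. 1 \<le> i \<longrightarrow> i \<le> j \<longrightarrow> j \<le> n \<longrightarrow> J j \<le> J i"
    and mn: "m + 1 \<le> n" and s: "\<sigma> \<in> configs N n"
  shows "hamiltonian N n J h \<sigma> - hamiltonian N n J h all_minus \<ge>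
     real (card (plusset N n \<sigma>)) * ((1 - 1/real N) * (\<Sum>i=m+1..n. J i * real N^i) + J (m+1) * real N^m - h
        - real (card (plusset N n \<sigma>)) * J (m+1))"
proof -
  let ?P = "plusset N n \<sigma>"
  let ?c = "(1 - 1/real N) * (\<Sum>i=m+1..n. J i * real N^i) + J (m+1) * real N^m - real (card ?P) * J (m+1)"
  have PL: "?P \<subseteq> lattice N n" unfolding plusset_def by auto
  have "(\<Sum>v\<in>?P. ?c) \<le> (\<Sum>v\<in>?P. \<Sum>w\<in>lattice N n - ?P. J (hdist N v w))"
    by (rule sum_mono) (rule row_lower[OF N2 Jpos Jmono PL _ mn])
  thus ?thesis unfolding energy[OF s] by (simp add: algebra_simps)
qed

definition Cr :: "nat \<Rightarrow> nat \<Rightarrow> nat \<Rightarrow> real" where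
  "Cr N i x = real (x mod N^i) * (real N^i - real (x mod N^i))"

lemma seg_set:
  assumes N1: "N \<ge> 1" and x: "x < N^n" and i: "i \<le> n"
  shows "{p\<in>{1..x}\<times>{x+1..N^n}. same_block N i (fst p) (snd p)} =
         {(x div N^i)*N^i+1..x} \<times> {x+1..(x div N^i + 1)*N^i}"
proof -
  let ?M = "N^i" let ?c = "x div N^i"
  have M: "?M > 0" using N1 by simp
  have "N^n = ?M * N^(n-i)" using i by (simp flip: power_add)
  hence "x < N^(n-i) * ?M" using x by (simp add: mult.commute)
  hence "?c < N^(n-i)" by (rule less_mult_imp_div_less)
  hence "?c + 1 \<le> N^(n-i)" by simp
  hence top: "(?c+1)*?M \<le> N^n" using \<open>N^n = ?M * N^(n-i)\<close> by (metis mult.commute mult_le_mono1)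
  show ?thesis
  proof (intro set_eqI iffI)
    fix p assume "p \<in> {p\<in>{1..x}\<times>{x+1..N^n}. same_block N i (fst p) (snd p)}"
    then obtain v w where p: "p = (v,w)" "1 \<le> v" "v \<le> x" "x+1 \<le> w" "w \<le> N^n"
      "(v-1) div ?M = (w-1) div ?M" unfolding same_block_def by auto
    define b where "b = (v-1) div ?M"
    have vb: "b*?M+1 \<le> v" using blk_iff[OF M p(2), of b] b_def by simp
    have wb: "w \<le> (b+1)*?M" using blk_iff[OF M, of w b] b_def p by simp
    have "x div ?M = b"
      by (rule div_nat_eqI) (use vb wb p in \<open>auto simp: algebra_simps\<close>)
    thus "p \<in> {?c*?M+1..x} \<times> {x+1..(?c+1)*?M}" using p vb wb by auto
  next
    fix p assume "p \<in> {?c*?M+1..x} \<times> {x+1..(?c+1)*?M}"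
    then obtain v w where p: "p = (v,w)" "?c*?M+1 \<le> v" "v \<le> x" "x+1 \<le> w" "w \<le> (?c+1)*?M" by auto
    have "(v-1) div ?M = ?c" using blk_iff[OF M, of v ?c] p by simp
    moreover have "(w-1) div ?M = ?c" using blk_iff[OF M, of w ?c] p by simp
    ultimately show "p \<in> {p\<in>{1..x}\<times>{x+1..N^n}. same_block N i (fst p) (snd p)}"
      using p top unfolding same_block_def by auto
  qed
qed

lemma seg_card:
  assumes N1: "N \<ge> 1" and x: "x \<le> N^n" and i: "i \<le> n"
  shows "real (card {p\<in>{1..x}\<times>{x+1..N^n}. same_block N i (fst p) (snd p)}) = Cr N i x"
proof (cases "x = N^n")
  case True
  have "x mod N^i = 0" using True i by (simp add: le_imp_power_dvd)
  thus ?thesis using True unfolding Cr_def by simp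
next
  case False
  hence xl: "x < N^n" using x by simp
  let ?M = "N^i" let ?c = "x div N^i"
  have xe: "x = ?c * ?M + x mod ?M" by (rule div_mult_mod_eq[symmetric])
  have M: "x mod ?M < ?M" using N1 by simp
  have "card ({?c*?M+1..x} \<times> {x+1..(?c+1)*?M}) = (x mod ?M) * (?M - x mod ?M)"
  proof -
    have "x - ?c*?M = x mod ?M" using xe by linarith
    moreover have "(?c+1)*?M - x = ?M - x mod ?M"
    proof -
      have "(?c+1)*?M = ?c*?M + ?M" by simp
      thus ?thesis using xe M by linarith
    qed
    ultimately show ?thesis by (simp add: card_cartesian_product)
  qed
  thus ?thesis unfolding seg_set[OF N1 xl i] Cr_def using M by (simp add: of_nat_diff)
qed

lemma energy_sig:
  fixes J :: "nat \<Rightarrow> real"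
  assumes N1: "N \<ge> 1" and x: "x \<le> N^n"
  shows "hamiltonian N n J h (sig x) - hamiltonian N n J h all_minus =
         (\<Sum>l=1..n. J l * (Cr N l x - Cr N (l-1) x)) - h * real x"
proof -
  let ?P = "{1..x}" let ?Q = "{x+1..N^n}"
  have P: "plusset N n (sig x) = ?P" using x unfolding plusset_def sig_def lattice_def by auto
  have Q: "lattice N n - ?P = ?Q" unfolding lattice_def by auto
  define d where "d p = hdist N (fst p) (snd p)" for p :: "nat \<times> nat"
  have inL: "p \<in> ?P \<times> ?Q \<Longrightarrow> fst p \<in> lattice N n \<and> snd p \<in> lattice N n \<and> fst p \<noteq> snd p" for p
    using x unfolding lattice_def by auto
  have dr: "\<forall>p\<in>?P \<times> ?Q. d p \<in> {1..n}"
    using inL hdist_pos hdist_le_n unfolding d_def by fastforce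
  have "(\<Sum>v\<in>?P. \<Sum>w\<in>?Q. J (hdist N v w)) = (\<Sum>p\<in>?P \<times> ?Q. J (d p))"
    unfolding d_def by (simp add: sum.cartesian_product split_def)
  also have "\<dots> = (\<Sum>l=1..n. J l * real (card {p\<in>?P \<times> ?Q. d p = l}))"
    by (rule sum_level[OF _ dr]) simp
  also have "\<dots> = (\<Sum>l=1..n. J l * (Cr N l x - Cr N (l-1) x))"
  proof (intro sum.cong refl)
    fix l assume l: "l \<in> {1..n}"
    have c: "real (card {p\<in>?P \<times> ?Q. d p \<le> k}) = Cr N k x" if "k \<le> n" for k
    proof -
      have "{p\<in>?P \<times> ?Q. d p \<le> k} = {p\<in>?P \<times> ?Q. same_block N k (fst p) (snd p)}"
        using inL hdist_le_iff unfolding d_def by blast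
      thus ?thesis using seg_card[OF N1 x that] by simp
    qed
    have "real (card {p\<in>?P \<times> ?Q. d p = l}) = Cr N l x - Cr N (l-1) x"
      using card_level[of "?P \<times> ?Q" l d] c[of l] c[of "l-1"] l by auto
    thus "J l * real (card {p\<in>?P \<times> ?Q. d p = l}) = J l * (Cr N l x - Cr N (l-1) x)" by simp
  qed
  finally show ?thesis unfolding energy[OF sig_configs[OF x]] P Q by simp
qed

lemma telescope:
  fixes f c :: "nat \<Rightarrow> real"
  assumes "1 \<le> a" "a \<le> n + 1"
  shows "(\<Sum>l=a..n. f l * (c l - c (l-1))) =
         (\<Sum>l=a..n. (f l - f (l+1)) * c l) + f (n+1) * c n - f a * c (a-1)"
  using assms
proof (induction n)
  case 0 thus ?case by auto
next
  case (Suc n)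
  show ?case
  proof (cases "a \<le> n + 1")
    case True
    have "(\<Sum>l=a..Suc n. f l * (c l - c (l-1))) = (\<Sum>l=a..n. f l * (c l - c (l-1))) + f (Suc n) * (c (Suc n) - c n)"
      using True by (simp add: sum.cl_ivl_Suc)
    moreover have "(\<Sum>l=a..Suc n. (f l - f (l+1)) * c l) = (\<Sum>l=a..n. (f l - f (l+1)) * c l) + (f (Suc n) - f (Suc n + 1)) * c (Suc n)"
      using True by (simp add: sum.cl_ivl_Suc)
    ultimately show ?thesis using Suc.IH[OF Suc.prems(1) True] by (simp add: algebra_simps)
  next
    case False
    hence "a = Suc n + 1" using Suc.prems by simp
    thus ?thesis by simp
  qed
qed

lemma mod_digits:
  assumes "N \<ge> 1"
  shows "k mod N^i = (\<Sum>j<i. digit N k j * N^j)"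
proof (induction i)
  case 0 thus ?case by simp
next
  case (Suc i)
  have "k mod N^Suc i = N^i * (k div N^i mod N) + k mod N^i"
    by (subst power_Suc2, rule mod_mult2_eq)
  thus ?case using Suc.IH by (simp add: digit_def algebra_simps)
qed

lemma mod_digits_real:
  assumes "N \<ge> 1"
  shows "real (k mod N^i) = (\<Sum>j<i. real (digit N k j) * real N^j)"
  using mod_digits[OF assms, of k i] by (simp add: of_nat_sum)

definition lowA3 :: "nat \<Rightarrow> nat \<Rightarrow> (nat \<Rightarrow> real) \<Rightarrow> nat \<Rightarrow> real" where
  "lowA3 N m J k = (let a = digit N k; NN = real N in
     (\<Sum>i<m. J (i+1) * NN ^ i *
          ((NN - real (a i) - 1) * (\<Sum>j\<le>i. real (a j) * NN ^ j)
           + real (a i) * (NN ^ i - (\<Sum>j<i. real (a j) * NN ^ j)))))"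

lemma lowA3_Cr:
  assumes N1: "N \<ge> 1"
  shows "lowA3 N m J k = (\<Sum>i<m. J (i+1) * (Cr N (i+1) k - Cr N i k))"
  unfolding lowA3_def Let_def
proof (intro sum.cong refl)
  fix i assume "i \<in> {..<m}"
  let ?a = "real (digit N k i)" let ?M = "real N ^ i" let ?NN = "real N"
  define r where "r = real (k mod N^i)"
  define R where "R = real (k mod N^(i+1))"
  have r: "(\<Sum>j<i. real (digit N k j) * real N ^ j) = r" unfolding r_def using mod_digits_real[OF N1] by simp
  have R: "(\<Sum>j\<le>i. real (digit N k j) * real N ^ j) = R" unfolding R_def
    using mod_digits_real[OF N1, of k "i+1"] by (simp add: lessThan_Suc_atMost)
  have Rr: "R = ?a * ?M + r"
  proof -
    have "k mod N^(i+1) = N^i * (k div N^i mod N) + k mod N^i"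
      using mod_mult2_eq[of k "N^i" N] by (simp add: mult.commute)
    thus ?thesis unfolding R_def r_def digit_def by (simp add: algebra_simps)
  qed
  have C1: "Cr N (i+1) k = R * (?NN * ?M - R)" unfolding Cr_def R_def by (simp add: power_Suc2 mult.commute)
  have C0: "Cr N i k = r * (?M - r)" unfolding Cr_def r_def by simp
  show "J (i+1) * ?NN ^ i * ((?NN - ?a - 1) * (\<Sum>j\<le>i. real (digit N k j) * ?NN ^ j)
           + ?a * (?NN ^ i - (\<Sum>j<i. real (digit N k j) * ?NN ^ j)))
        = J (i+1) * (Cr N (i+1) k - Cr N i k)"
    unfolding r R C1 C0 Rr by (simp add: algebra_simps)
qed

lemma Cr_mod_eq:
  assumes "N \<ge> 1" "l \<le> m" "k mod N^m = x mod N^m"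
  shows "Cr N l k = Cr N l x"
proof -
  have d: "N^l dvd N^m" using assms(2) by (simp add: le_imp_power_dvd)
  have "k mod N^l = x mod N^l"
    by (metis assms(3) d mod_mod_cancel)
  thus ?thesis unfolding Cr_def by simp
qed

lemma Cr_step:
  assumes N1: "N \<ge> 1" and l: "m + 1 \<le> l"
  shows "Cr N l x \<le> Cr N l (x mod N^(m+1)) + (real x - real (x mod N^(m+1))) * (real N^l - real N^(m+1))"
proof -
  let ?K = "N^(m+1)" let ?M = "N^l"
  have dvd: "?K dvd ?M" using l by (intro le_imp_power_dvd) simp
  define r where "r = x mod ?M"
  define y where "y = x mod ?K"
  define q where "q = r div ?K"
  have y: "y = r mod ?K" unfolding y_def r_def using dvd by (simp add: mod_mod_cancel)
  have rq: "r = ?K * q + y" unfolding y q_def by simp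
  have M0M: "?K \<le> ?M" using l N1 by (intro power_increasing) auto
  have yM0: "y < ?K" unfolding y_def using N1 by simp
  have ymodM: "y mod ?M = y" using yM0 M0M by simp
  have Cry: "Cr N l (x mod ?K) = real y * (real ?M - real y)"
    unfolding Cr_def y_def[symmetric] ymodM by simp
  have Crx: "Cr N l x = real r * (real ?M - real r)" unfolding Cr_def r_def by simp
  have rx: "r \<le> x" unfolding r_def by simp
  have xe: "x = ?K * (x div ?K) + y" unfolding y_def by simp
  have qle: "q \<le> x div ?K" unfolding q_def using rx by (simp add: div_le_mono)
  define t' where "t' = real ?K * real q"
  define t where "t = real x - real y"
  have tt: "t' \<le> t" unfolding t'_def t_def using qle xe
    by (metis (no_types, lifting) add_diff_cancel_right' mult_le_mono2 of_nat_add of_nat_le_iff of_nat_mult)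
  have t'0: "t' \<ge> 0" unfolding t'_def by simp
  have rr: "real r = t' + real y" unfolding t'_def using rq by simp
  have MM: "real ?K \<le> real ?M" using M0M by linarith
  have key: "real r * (real ?M - real r) - real y * (real ?M - real y) = t' * (real ?M - t' - 2 * real y)"
    unfolding rr by (simp add: algebra_simps power2_eq_square)
  have "t' * (real ?M - t' - 2 * real y) \<le> t * (real ?M - real ?K)"
  proof (cases "q = 0")
    case True
    hence "t' = 0" unfolding t'_def by simp
    moreover have "t \<ge> 0" using tt t'0 by simp
    ultimately show ?thesis using MM by simp
  next
    case False
    hence "real q \<ge> 1" by simp
    hence "real ?K * 1 \<le> real ?K * real q" by (intro mult_left_mono) auto
    hence "t' \<ge> real ?K" unfolding t'_def by simp
    hence "real ?M - t' - 2 * real y \<le> real ?M - real ?K" by simp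
    hence "t' * (real ?M - t' - 2 * real y) \<le> t' * (real ?M - real ?K)" using t'0 by (rule mult_left_mono)
    also have "\<dots> \<le> t * (real ?M - real ?K)" using tt MM by (intro mult_right_mono) auto
    finally show ?thesis .
  qed
  thus ?thesis using key unfolding Crx Cry t_def y_def by simp
qed

lemma Cr_nonneg: "N \<ge> 1 \<Longrightarrow> Cr N l x \<ge> 0"
  unfolding Cr_def by (intro mult_nonneg_nonneg) (simp_all add: less_imp_le)

lemma quad_bound:
  fixes B J y :: real
  assumes "J > 0"
  shows "y * (B - J * y) \<le> B^2 / (4 * J)"
proof -
  have "4 * J * (y * (B - J * y)) = B^2 - (B - 2 * J * y)^2" by (simp add: algebra_simps power2_eq_square)
  also have "\<dots> \<le> B^2" by simp
  finally show ?thesis using assms by (simp add: field_simps)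
qed

lemma energy_sig_upper:
  fixes J :: "nat \<Rightarrow> real"
  assumes N2: "N \<ge> 2" and Jpos: "\<forall>i\<in>{1..n}. J i > 0"
    and Jmono: "\<forall>i j. 1 \<le> i \<longrightarrow> i \<le> j \<longrightarrow> j \<le> n \<longrightarrow> J j \<le> J i"
    and mn: "m + 1 \<le> n"
    and hmax: "(1 - 1/real N) * (\<Sum>i=m+1..n. J i * real N^i) - h \<le> (1 - 1/real N) * J (m+1) * real N^(m+1)"
    and x: "x \<le> N^n"
  shows "\<exists>k. 1 \<le> k \<and> k \<le> N^m \<and>
    hamiltonian N n J h (sig x) - hamiltonian N n J h all_minus \<le>
      lowA3 N m J k + ((1 - 1/real N) * (\<Sum>i=m+1..n. J i * real N^i) + J (m+1) * real N^m - h)^2 / (4 * J (m+1))"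
proof -
  have N1: "N \<ge> 1" using N2 by simp
  define S where "S = (\<Sum>i=m+1..n. J i * real N^i)"
  define Jm where "Jm = J (m+1)"
  define B where "B = (1 - 1/real N) * S + Jm * real N^m - h"
  have Jm0: "Jm > 0" using Jpos mn unfolding Jm_def by auto
  define k where "k = (if x mod N^m = 0 then N^m else x mod N^m)"
  have k1: "1 \<le> k" "k \<le> N^m" unfolding k_def using N1 by (auto simp: less_imp_le)
  have kmod: "k mod N^m = x mod N^m" unfolding k_def by auto
  have sp: "{1..n} = {1..m} \<union> {m+1..n}" using mn by auto
  have E: "hamiltonian N n J h (sig x) - hamiltonian N n J h all_minus =
     (\<Sum>l=1..m. J l * (Cr N l x - Cr N (l-1) x)) + (\<Sum>l=m+1..n. J l * (Cr N l x - Cr N (l-1) x)) - h * real x"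
    unfolding energy_sig[OF N1 x] sp by (subst sum.union_disjoint) auto
  have low: "(\<Sum>l=1..m. J l * (Cr N l x - Cr N (l-1) x)) = lowA3 N m J k"
  proof -
    have "(\<Sum>l=1..m. J l * (Cr N l x - Cr N (l-1) x)) = (\<Sum>i<m. J (Suc i) * (Cr N (Suc i) x - Cr N i x))"
      using sum.atLeast1_atMost_eq[of "\<lambda>l. J l * (Cr N l x - Cr N (l-1) x)" m] by simp
    also have "\<dots> = (\<Sum>i<m. J (i+1) * (Cr N (i+1) k - Cr N i k))"
      by (intro sum.cong refl) (use Cr_mod_eq[OF N1 _ kmod] in auto)
    also have "\<dots> = lowA3 N m J k" by (rule lowA3_Cr[OF N1, symmetric])
    finally show ?thesis .
  qed
  define Jt where "Jt l = (if l \<le> n then J l else 0)" for l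
  define D where "D l = Jt l - Jt (l+1)" for l
  have D0: "l \<in> {m+1..n} \<Longrightarrow> D l \<ge> 0" for l
  proof -
    assume l: "l \<in> {m+1..n}"
    have "J n > 0" using Jpos mn by auto
    thus ?thesis unfolding D_def Jt_def using Jmono l by (cases "l = n") auto
  qed
  have tel: "(\<Sum>l=m+1..n. J l * (c l - c (l-1))) = (\<Sum>l=m+1..n. D l * c l) - Jm * c m" for c :: "nat \<Rightarrow> real"
  proof -
    have "(\<Sum>l=m+1..n. J l * (c l - c (l-1))) = (\<Sum>l=m+1..n. Jt l * (c l - c (l-1)))"
      by (intro sum.cong refl) (auto simp: Jt_def)
    also have "\<dots> = (\<Sum>l=m+1..n. D l * c l) + Jt (n+1) * c n - Jt (m+1) * c (m+1-1)"
      unfolding D_def by (rule telescope) (use mn in auto)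
    finally show ?thesis using mn by (simp add: Jt_def Jm_def)
  qed
  have powdiff: "(\<Sum>l=m+1..n. J l * (real N^l - real N^(l-1))) = (1 - 1/real N) * S"
  proof -
    have "(\<Sum>l=m+1..n. J l * (real N^l - real N^(l-1))) = (\<Sum>l=m+1..n. (1 - 1/real N) * (J l * real N^l))"
    proof (intro sum.cong refl)
      fix l assume l: "l \<in> {m+1..n}"
      then obtain q where q: "l = Suc q" by (cases l) auto
      have "real N^l - real N^(l-1) = (1 - 1/real N) * real N^l" using N2 q by (simp add: field_simps)
      thus "J l * (real N^l - real N^(l-1)) = (1 - 1/real N) * (J l * real N^l)" by simp
    qed
    thus ?thesis unfolding S_def by (simp add: sum_distrib_left)
  qed
  have T1: "(\<Sum>l=m+1..n. D l * real N^l) = (1 - 1/real N) * S + Jm * real N^m"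
    using tel[of "\<lambda>l. real N^l"] powdiff by simp
  have T2: "(\<Sum>l=m+1..n. D l) = Jm"
    using tel[of "\<lambda>l. 1"] by simp
  have T3: "(\<Sum>l=m+1..n. D l * (real N^l - real N^(m+1))) \<le> h"
  proof -
    have "(\<Sum>l=m+1..n. D l * (real N^l - real N^(m+1))) = (1 - 1/real N) * S + Jm * (real N^m - real N^(m+1))"
      using tel[of "\<lambda>l. real N^l - real N^(m+1)"] powdiff by simp
    also have "Jm * (real N^m - real N^(m+1)) = - (1 - 1/real N) * Jm * real N^(m+1)"
      using N2 by (simp add: field_simps)
    finally show ?thesis using hmax unfolding S_def Jm_def by linarith
  qed
  define y where "y = x mod N^(m+1)"
  define t where "t = real x - real y"
  have t0: "t \<ge> 0" unfolding t_def y_def by simp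
  have yl: "y < N^(m+1)" unfolding y_def using N1 by simp
  have Cry: "l \<in> {m+1..n} \<Longrightarrow> Cr N l y = real y * (real N^l - real y)" for l
  proof -
    assume l: "l \<in> {m+1..n}"
    have "N^(m+1) \<le> N^l" using l N1 by (intro power_increasing) auto
    hence "y mod N^l = y" using yl by simp
    thus ?thesis unfolding Cr_def by simp
  qed
  have high: "(\<Sum>l=m+1..n. J l * (Cr N l x - Cr N (l-1) x)) \<le> real y * ((1 - 1/real N) * S + Jm * real N^m) - Jm * real y^2 + t * h"
  proof -
    have "(\<Sum>l=m+1..n. J l * (Cr N l x - Cr N (l-1) x)) = (\<Sum>l=m+1..n. D l * Cr N l x) - Jm * Cr N m x"
      by (rule tel)
    also have "\<dots> \<le> (\<Sum>l=m+1..n. D l * Cr N l x)" using Jm0 Cr_nonneg[OF N1, of m x] by simp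
    also have "\<dots> \<le> (\<Sum>l=m+1..n. D l * (real y * (real N^l - real y) + t * (real N^l - real N^(m+1))))"
    proof (rule sum_mono)
      fix l assume l: "l \<in> {m+1..n}"
      have "Cr N l x \<le> Cr N l y + t * (real N^l - real N^(m+1))"
        using Cr_step[OF N1, of m l x] l unfolding t_def y_def by simp
      thus "D l * Cr N l x \<le> D l * (real y * (real N^l - real y) + t * (real N^l - real N^(m+1)))"
        using Cry[OF l] D0[OF l] by (simp add: mult_left_mono)
    qed
    also have "\<dots> = real y * (\<Sum>l=m+1..n. D l * real N^l) - real y^2 * (\<Sum>l=m+1..n. D l)
                   + t * (\<Sum>l=m+1..n. D l * (real N^l - real N^(m+1)))"
      by (simp add: algebra_simps sum.distrib sum_distrib_left sum_subtractf power2_eq_square)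
    also have "\<dots> \<le> real y * ((1 - 1/real N) * S + Jm * real N^m) - Jm * real y^2 + t * h"
    proof -
      have "t * (\<Sum>l=m+1..n. D l * (real N^l - real N^(m+1))) \<le> t * h" using T3 t0 by (rule mult_left_mono)
      thus ?thesis unfolding T1 T2 by (simp add: mult.commute)
    qed
    finally show ?thesis .
  qed
  have "hamiltonian N n J h (sig x) - hamiltonian N n J h all_minus \<le> lowA3 N m J k + real y * (B - Jm * real y)"
    using E low high unfolding t_def B_def by (simp add: algebra_simps power2_eq_square)
  also have "real y * (B - Jm * real y) \<le> B^2 / (4 * Jm)" by (rule quad_bound[OF Jm0])
  finally show ?thesis using k1 unfolding B_def S_def Jm_def by auto
qed

lemma A3_ratio_eq:
  "A3_ratio N n J h k = (lowA3 N (m_hat N n J h) J k + real k * (\<Sum>i = m_hat N n J h+1..n. J i * real N ^ i))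
     / (of_int \<lceil>s_hat N n J h\<rceil> * (2 * s_hat N n J h - of_int \<lceil>s_hat N n J h\<rceil> + 1) * J (m_hat N n J h+1) * real N ^ (2*m_hat N n J h))"
  unfolding A3_ratio_def lowA3_def Let_def by simp

lemma lowA3_top:
  assumes "N \<ge> 1"
  shows "lowA3 N m J (N^m) = 0"
proof -
  have "lowA3 N m J (N^m) = (\<Sum>i<m. J (i+1) * (Cr N (i+1) (N^m) - Cr N i (N^m)))" by (rule lowA3_Cr[OF assms])
  also have "\<dots> = 0"
  proof (intro sum.neutral ballI)
    fix i assume "i \<in> {..<m}"
    hence "i + 1 \<le> m" "i \<le> m" by auto
    hence "N^(i+1) dvd N^m" "N^i dvd N^m" using le_imp_power_dvd by blast+
    thus "J (i+1) * (Cr N (i+1) (N^m) - Cr N i (N^m)) = 0" unfolding Cr_def by simp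
  qed
  finally show ?thesis .
qed

lemma aux_sq:
  fixes Jm X U :: real
  assumes "Jm > 0" "X > 0"
  shows "((U + Jm * X) / (2 * Jm * X))^2 * Jm * X^2 = (U + Jm * X)^2 / (4 * Jm)"
  using assms by (simp add: field_simps power2_eq_square)

lemma aux_div1:
  fixes a x y z :: real
  assumes "y \<noteq> 0" "z \<noteq> 0"
  shows "a * (x / y) / (z / y) = a * (x / z)"
  using assms by (simp add: field_simps)

lemma aux_div2:
  fixes B Jm Z :: real
  assumes "Jm > 0" "Z \<noteq> 0"
  shows "(B^2 - 4 * Jm^2) / Z = (B^2 / (4 * Jm) - Jm) / (Z / (4 * Jm))"
  using assms by (simp add: field_simps power2_eq_square)

lemma per_N:
  fixes J :: "nat \<Rightarrow> real"
  assumes N2: "N \<ge> 2" and n1: "n \<ge> 1" and hpos: "h > 0" and Jpos: "\<forall>i\<in>{1..n}. J i > 0"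
    and Jmono: "\<forall>i j. 1 \<le> i \<longrightarrow> i \<le> j \<longrightarrow> j \<le> n \<longrightarrow> J j \<le> J i"
    and A1: "(1 - 1 / real N) * (\<Sum>i = 1..n. J i * real N ^ i) > h"
  defines "m \<equiv> m_hat N n J h"
  defines "S \<equiv> (\<Sum>i = m+1..n. J i * real N ^ i)"
  defines "T \<equiv> (1/4) * inverse (J (m+1)) * (S - h)^2"
  shows "T > 0"
    and "\<And>k. 1 \<le> k \<Longrightarrow> k \<le> N^m \<Longrightarrow> (\<forall>k'\<in>{1..N^m}. lowA3 N m J k' \<le> lowA3 N m J k) \<Longrightarrow>
           Gamma_star N n J h / T \<le> 1 + A3_ratio N n J h k"
    and "A3_ratio N n J h (N^m) < 1 \<Longrightarrow>
           Gamma_star N n J h / T \<ge> (1 - A3_ratio N n J h (N^m)) / (1 + A3_ratio N n J h (N^m) / 2)^2"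
proof -
  have N1: "N \<ge> 1" using N2 by simp
  have Nr: "real N \<ge> 2" using N2 by simp
  define Mset where "Mset = {m. m \<le> n - 1 \<and> (1 - 1 / real N) * (\<Sum>i = m+1..n. J i * real N ^ i) > h}"
  have finM: "finite Mset" unfolding Mset_def by simp
  have "0 \<in> Mset" unfolding Mset_def using A1 by simp
  hence "Max Mset \<in> Mset" using finM by (intro Max_in) auto
  hence mM: "m \<in> Mset" unfolding m_def m_hat_def Mset_def by simp
  have mn: "m + 1 \<le> n" using mM n1 unfolding Mset_def by auto
  have U0: "(1 - 1/real N) * S - h > 0" using mM unfolding Mset_def S_def by simp
  define Jm where "Jm = J (m+1)"
  have Jm0: "Jm > 0" using Jpos mn unfolding Jm_def by auto
  have Ssplit: "S = Jm * real N^(m+1) + (\<Sum>i = m+2..n. J i * real N ^ i)"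
    unfolding S_def Jm_def using mn by (simp add: sum.atLeast_Suc_atMost)
  have rest0: "(\<Sum>i = m+2..n. J i * real N ^ i) \<ge> 0"
  proof (rule sum_nonneg)
    fix i assume "i \<in> {m+2..n}"
    hence "J i > 0" using Jpos by auto
    thus "J i * real N^i \<ge> 0" by simp
  qed
  have hmax: "(1 - 1/real N) * S - h \<le> (1 - 1/real N) * Jm * real N^(m+1)"
  proof (cases "m + 1 \<le> n - 1")
    case True
    have mMax: "m = Max Mset" unfolding m_def m_hat_def Mset_def by simp
    have "m + 1 \<notin> Mset"
    proof
      assume "m + 1 \<in> Mset"
      hence "m + 1 \<le> Max Mset" using finM by (intro Max_ge)
      thus False using mMax by simp
    qed
    hence "(1 - 1/real N) * (\<Sum>i = m+2..n. J i * real N ^ i) \<le> h" using True unfolding Mset_def by auto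
    thus ?thesis unfolding Ssplit using hpos by (simp add: algebra_simps)
  next
    case False
    hence "n = m + 1" using mn by simp
    hence "S = Jm * real N^(m+1)" unfolding S_def Jm_def by simp
    thus ?thesis using hpos by (simp add: algebra_simps)
  qed
  define B where "B = (1 - 1/real N) * S + Jm * real N^m - h"
  define G where "G = S - h - B"
  have JN0: "Jm * real N^m > 0" using Jm0 Nr by simp
  have B0: "B > 0" unfolding B_def using U0 JN0 by linarith
  have G_eq: "G = S / real N - Jm * real N^m" unfolding G_def B_def using Nr by (simp add: field_simps)
  have SJ: "S \<ge> Jm * real N^(m+1)" using Ssplit rest0 by simp
  have G0: "G \<ge> 0" unfolding G_eq using SJ Nr by (simp add: field_simps)
  have Bup: "B \<le> 2 * Jm * real N^(m+1)"
  proof -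
    have "B \<le> (1 - 1/real N) * Jm * real N^(m+1) + Jm * real N^m" unfolding B_def using hmax by simp
    also have "(1 - 1/real N) * Jm * real N^(m+1) \<le> Jm * real N^(m+1)" using Jm0 Nr by (simp add: field_simps)
    also have "Jm * real N^m \<le> Jm * real N^(m+1)" using Jm0 Nr by (intro mult_left_mono) auto
    finally show ?thesis by simp
  qed
  have SBG: "S - h = B + G" unfolding G_def by simp
  have T_eq: "T = (B + G)^2 / (4 * Jm)" unfolding T_def Jm_def[symmetric] SBG by (simp add: field_simps)
  show Tpos: "T > 0" unfolding T_eq using B0 G0 Jm0 by simp
  define s where "s = s_hat N n J h"
  have s_eq: "s = ((1 - 1/real N) * S - h) / (2 * Jm * real N^m)"
    unfolding s_def s_hat_def Let_def m_def[symmetric] S_def[symmetric] Jm_def[symmetric] using Nr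
    by (simp add: field_simps)
  have s0: "s > 0" unfolding s_eq using U0 Jm0 Nr by simp
  define c where "c = real_of_int \<lceil>s\<rceil>"
  have cs: "s \<le> c" "c < s + 1" unfolding c_def by (simp_all add: ceiling_correct) linarith
  define D where "D = c * (2 * s - c + 1) * Jm * real N^(2*m)"
  have D0: "D > 0" unfolding D_def using cs s0 Jm0 Nr by (intro mult_pos_pos) auto
  have DB: "D \<le> B^2 / (4 * Jm)"
  proof -
    have "c * (2 * s - c + 1) \<le> (s + 1/2)^2"
    proof -
      have "(s + 1/2)^2 - c * (2 * s - c + 1) = (c - (s + 1/2))^2" by (simp add: algebra_simps power2_eq_square)
      thus ?thesis by (smt (verit) zero_le_power2)
    qed
    hence "D \<le> (s + 1/2)^2 * Jm * real N^(2*m)" unfolding D_def using Jm0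
      by (intro mult_right_mono) auto
    also have "(s + 1/2)^2 * Jm * real N^(2*m) = B^2 / (4 * Jm)"
    proof -
      define U where "U = (1 - 1/real N) * S - h"
      define X where "X = real N^m"
      have X0: "X > 0" unfolding X_def using Nr by simp
      have "s + 1/2 = (U + Jm * X) / (2 * Jm * X)"
        unfolding s_eq U_def[symmetric] X_def[symmetric] using X0 Jm0 by (simp add: field_simps)
      moreover have "real N^(2*m) = X^2" unfolding X_def by (simp add: power_even_eq)
      moreover have "B = U + Jm * X" unfolding B_def U_def X_def by simp
      ultimately show ?thesis using aux_sq[OF Jm0 X0] by simp
    qed
    finally show ?thesis .
  qed
  have rho_eq: "A3_ratio N n J h k = (lowA3 N m J k + real k * S) / D" for k
    unfolding A3_ratio_eq m_def[symmetric] S_def[symmetric] Jm_def[symmetric] s_def[symmetric] c_def[symmetric] D_def by simp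
  define r1 where "r1 = A3_ratio N n J h (N^m)"
  have r1_eq: "r1 = real (N^m) * S / D" unfolding r1_def rho_eq lowA3_top[OF N1] by simp
  have Sn: "S \<ge> 0" using SJ Jm0 by (smt (verit) mult_nonneg_nonneg of_nat_0_le_iff zero_le_power)
  have r1_ge: "4 * Jm * (real N^m * S) / B^2 \<le> r1"
  proof -
    have "real N^m * S / (B^2 / (4 * Jm)) \<le> real N^m * S / D" using D0 DB Sn B0 Jm0
      by (intro divide_left_mono) auto
    thus ?thesis unfolding r1_eq using Jm0 by (simp add: field_simps)
  qed
  have NS_G: "real N^(m+1) * G \<le> real N^m * S" unfolding G_eq using Jm0 Nr by (simp add: field_simps)
  have NS_J: "Jm \<le> real N^m * S"
  proof -
    have p1: "1 \<le> real N^(m+1)" using Nr by (intro one_le_power) simp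
    have "Jm * 1 \<le> Jm * real N^(m+1)" using Jm0 p1 by (intro mult_left_mono) auto
    hence "Jm \<le> Jm * real N^(m+1)" by simp
    also have "\<dots> \<le> S" by (rule SJ)
    also have "S \<le> real N^m * S"
    proof -
      have "1 \<le> real N^m" using Nr by (intro one_le_power) simp
      hence "1 * S \<le> real N^m * S" using Sn by (intro mult_right_mono) auto
      thus ?thesis by simp
    qed
    finally show ?thesis .
  qed
  have Bsq: "B^2 > 0" using B0 by simp
  have GB: "G \<le> r1 / 2 * B"
  proof -
    have "4 * Jm * (real N^(m+1) * G) / B^2 \<le> r1"
      using r1_ge NS_G Jm0 Bsq by (smt (verit) divide_right_mono mult_left_mono)
    hence "4 * Jm * real N^(m+1) * G \<le> r1 * B^2" using Bsq by (simp add: field_simps)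
    moreover have "2 * G * B \<le> 2 * G * (2 * Jm * real N^(m+1))" using Bup G0 by (intro mult_left_mono) auto
    ultimately have "2 * G * B \<le> r1 * B^2" by (simp add: algebra_simps)
    thus ?thesis using B0 by (simp add: power2_eq_square field_simps)
  qed
  have JB: "4 * Jm^2 \<le> r1 * B^2"
  proof -
    have "4 * Jm * Jm / B^2 \<le> r1"
      using r1_ge NS_J Jm0 Bsq by (smt (verit) divide_right_mono mult_left_mono)
    thus ?thesis using Bsq by (simp add: field_simps power2_eq_square)
  qed
  have Glow: "Gamma_star N n J h \<ge> B^2 / (4 * Jm) - Jm"
  proof -
    define z where "z = B / (2 * Jm)"
    define x0 where "x0 = nat \<lfloor>z\<rfloor>"
    have z0: "z > 0" unfolding z_def using B0 Jm0 by simp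
    have x0z: "real x0 \<le> z" "z < real x0 + 1" unfolding x0_def using z0 by linarith+
    have "z \<le> real N^(m+1)" unfolding z_def using Bup Jm0 by (simp add: field_simps)
    also have "real N^(m+1) \<le> real N^n" using mn Nr by (intro power_increasing) auto
    finally have "real x0 \<le> real N^n" using x0z by linarith
    hence "real x0 \<le> real (N^n)" by simp
    hence x0n: "x0 \<le> N^n" by (simp only: of_nat_le_iff)
    have val: "real x0 * (B - Jm * real x0) \<ge> B^2 / (4 * Jm) - Jm"
    proof -
      have "real x0 * (B - Jm * real x0) = Jm * (z^2 - (z - real x0)^2)"
        unfolding z_def using Jm0 by (simp add: field_simps power2_eq_square)
      moreover have "(z - real x0)^2 \<le> 1" using x0z by (intro power_le_one) auto
      ultimately have "real x0 * (B - Jm * real x0) \<ge> Jm * (z^2 - 1)" using Jm0 by simp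
      moreover have "Jm * (z^2 - 1) = B^2 / (4 * Jm) - Jm" unfolding z_def using Jm0 by (simp add: field_simps power2_eq_square)
      ultimately show ?thesis by simp
    qed
    show ?thesis
    proof (rule Gamma_ge[OF x0n])
      fix \<sigma> assume s: "\<sigma> \<in> configs N n" "card (plusset N n \<sigma>) = x0"
      have "hamiltonian N n J h \<sigma> - hamiltonian N n J h all_minus \<ge> real x0 * (B - Jm * real x0)"
        using energy_lower[OF N2 Jpos Jmono mn s(1)] s(2) unfolding B_def S_def Jm_def by (simp add: algebra_simps)
      thus "hamiltonian N n J h \<sigma> - hamiltonian N n J h all_minus \<ge> B^2 / (4 * Jm) - Jm" using val by simp
    qed
  qed
  show "Gamma_star N n J h / T \<le> 1 + A3_ratio N n J h k"
    if k: "1 \<le> k" "k \<le> N^m" "\<forall>k'\<in>{1..N^m}. lowA3 N m J k' \<le> lowA3 N m J k" for k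
  proof -
    have "N^m \<in> {1..N^m}" using N1 by simp
    hence "lowA3 N m J (N^m) \<le> lowA3 N m J k" using k(3) by blast
    hence low0: "lowA3 N m J k \<ge> 0" using lowA3_top[OF N1, of m J] by simp
    define r where "r = A3_ratio N n J h k"
    have r0: "r \<ge> 0" unfolding r_def rho_eq using low0 Sn D0 by simp
    have lowr: "lowA3 N m J k \<le> r * (B^2 / (4 * Jm))"
    proof -
      have "lowA3 N m J k \<le> r * D" unfolding r_def rho_eq using D0 Sn by (simp add: field_simps)
      also have "\<dots> \<le> r * (B^2 / (4 * Jm))" using DB r0 by (rule mult_left_mono)
      finally show ?thesis .
    qed
    have Gup: "Gamma_star N n J h \<le> (1 + r) * (B^2 / (4 * Jm))"
    proof (rule Gamma_le)
      fix x assume x: "x \<le> N^n"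
      obtain k' where k': "1 \<le> k'" "k' \<le> N^m" "hamiltonian N n J h (sig x) - hamiltonian N n J h all_minus \<le>
        lowA3 N m J k' + B^2 / (4 * Jm)"
        using energy_sig_upper[OF N2 Jpos Jmono mn hmax[unfolded S_def Jm_def] x] unfolding B_def S_def Jm_def by blast
      have "lowA3 N m J k' \<le> lowA3 N m J k" using k(3) k' by auto
      thus "hamiltonian N n J h (sig x) - hamiltonian N n J h all_minus \<le> (1 + r) * (B^2 / (4 * Jm))"
      proof -
        have "(1 + r) * (B^2 / (4 * Jm)) = B^2 / (4 * Jm) + r * (B^2 / (4 * Jm))" by (metis distrib_right mult.left_neutral)
        thus ?thesis using k'(3) lowr \<open>lowA3 N m J k' \<le> lowA3 N m J k\<close> by linarith
      qed
    qed
    have "Gamma_star N n J h / T \<le> (1 + r) * (B^2 / (4 * Jm)) / T" by (rule divide_right_mono[OF Gup]) (use Tpos in simp)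
    also have "\<dots> = (1 + r) * (B^2 / (B + G)^2)" unfolding T_eq by (rule aux_div1) (use Jm0 B0 G0 in auto)
    also have "\<dots> \<le> (1 + r) * 1"
    proof (rule mult_left_mono)
      have "B^2 \<le> (B + G)^2" using B0 G0 by (intro power_mono) auto
      thus "B^2 / (B + G)^2 \<le> 1" using B0 G0 by simp
    qed (use r0 in simp)
    finally show ?thesis unfolding r_def by simp
  qed
  show "Gamma_star N n J h / T \<ge> (1 - A3_ratio N n J h (N^m)) / (1 + A3_ratio N n J h (N^m) / 2)^2"
    if r1l: "A3_ratio N n J h (N^m) < 1"
  proof -
    have r1l': "r1 < 1" using r1l unfolding r1_def .
    have "(1 - r1) / (1 + r1/2)^2 = ((1 - r1) * B^2) / ((1 + r1/2) * B)^2"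
      using B0 by (simp add: power_mult_distrib)
    also have "\<dots> \<le> (B^2 - 4 * Jm^2) / (B + G)^2"
    proof (rule frac_le)
      have "r1 * B^2 \<le> 1 * B^2" using r1l' Bsq by (intro mult_right_mono) auto
      thus "0 \<le> B^2 - 4 * Jm^2" using JB by linarith
      show "(1 - r1) * B^2 \<le> B^2 - 4 * Jm^2" using JB by (simp add: algebra_simps)
      show "0 < (B + G)^2" using B0 G0 by simp
      show "(B + G)^2 \<le> ((1 + r1/2) * B)^2" using GB B0 G0 by (intro power_mono) (auto simp: algebra_simps)
    qed
    also have "\<dots> = (B^2 / (4 * Jm) - Jm) / T" unfolding T_eq by (rule aux_div2) (use Jm0 B0 G0 in auto)
    also have "\<dots> \<le> Gamma_star N n J h / T" by (rule divide_right_mono[OF Glow]) (use Tpos in simp)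
    finally show ?thesis unfolding r1_def .
  qed
qed


lemma exists_max_on:
  fixes f :: "nat \<Rightarrow> real"
  assumes "finite A" "A \<noteq> {}"
  shows "\<exists>k\<in>A. \<forall>k'\<in>A. f k' \<le> f k"
proof -
  have "Max (f ` A) \<in> f ` A" using assms by (intro Max_in) auto
  then obtain k where k: "k \<in> A" "f k = Max (f ` A)" by auto
  have "\<forall>k'\<in>A. f k' \<le> Max (f ` A)" using assms by auto
  hence "\<forall>k'\<in>A. f k' \<le> f k" using k(2) by simp
  thus ?thesis using k(1) by blast
qed

theorem theorem1p9:
  fixes n :: nat and J :: "nat \<Rightarrow> nat \<Rightarrow> real" and h :: "nat \<Rightarrow> real"
  assumes n_pos: "n \<ge> 1"
    and h_pos: "\<forall>N\<ge>2. h N > 0"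
    and J_pos: "\<forall>N\<ge>2. \<forall>i\<in>{1..n}. J N i > 0"
    and J_mono: "\<forall>N\<ge>2. \<forall>i j. 1 \<le> i \<longrightarrow> i \<le> j \<longrightarrow> j \<le> n \<longrightarrow> J N j \<le> J N i"
    and A1: "\<forall>N\<ge>2. (1 - 1 / real N) * (\<Sum>i = 1..n. J N i * real N ^ i) > h N"
    and A3: "\<forall>k :: nat \<Rightarrow> nat. (\<forall>N\<ge>2. 1 \<le> k N \<and> k N \<le> N ^ m_hat N n (J N) (h N)) \<longrightarrow>
               (\<lambda>N. A3_ratio N n (J N) (h N) (k N)) \<longlonglongrightarrow> 0"
  shows "\<exists>e :: nat \<Rightarrow> real. e \<longlonglongrightarrow> 0 \<and>
           (\<forall>\<^sub>F N in sequentially.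
              Gamma_star N n (J N) (h N) =
                (1 + e N) * (1/4) * inverse (J N (m_hat N n (J N) (h N) + 1)) *
                  ((\<Sum>i = m_hat N n (J N) (h N) + 1..n. J N i * real N ^ i) - h N) ^ 2)"
proof -
  define m where "m N = m_hat N n (J N) (h N)" for N
  define T where "T N = (1/4) * inverse (J N (m N + 1)) * ((\<Sum>i = m N + 1..n. J N i * real N ^ i) - h N) ^ 2" for N
  define G where "G N = Gamma_star N n (J N) (h N)" for N
  define e where "e N = G N / T N - 1" for N
  have hN: "N \<ge> 2 \<Longrightarrow> h N > 0" for N using h_pos by blast
  have JpN: "N \<ge> 2 \<Longrightarrow> \<forall>i\<in>{1..n}. J N i > 0" for N using J_pos by blast
  have JmN: "N \<ge> 2 \<Longrightarrow> \<forall>i j. 1 \<le> i \<longrightarrow> i \<le> j \<longrightarrow> j \<le> n \<longrightarrow> J N j \<le> J N i" for N using J_mono by blast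
  have A1N: "N \<ge> 2 \<Longrightarrow> (1 - 1 / real N) * (\<Sum>i = 1..n. J N i * real N ^ i) > h N" for N using A1 by blast
  have PN1: "N \<ge> 2 \<Longrightarrow> T N > 0" for N
    unfolding T_def m_def by (rule per_N(1)[OF _ n_pos hN JpN JmN A1N])
  have PN2: "N \<ge> 2 \<Longrightarrow> 1 \<le> k \<Longrightarrow> k \<le> N^m N \<Longrightarrow> (\<forall>k'\<in>{1..N^m N}. lowA3 N (m N) (J N) k' \<le> lowA3 N (m N) (J N) k) \<Longrightarrow>
           G N / T N \<le> 1 + A3_ratio N n (J N) (h N) k" for N k
    unfolding T_def m_def G_def by (rule per_N(2)[OF _ n_pos hN JpN JmN A1N])
  have PN3: "N \<ge> 2 \<Longrightarrow> A3_ratio N n (J N) (h N) (N^m N) < 1 \<Longrightarrow>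
           G N / T N \<ge> (1 - A3_ratio N n (J N) (h N) (N^m N)) / (1 + A3_ratio N n (J N) (h N) (N^m N) / 2)^2" for N
    unfolding T_def m_def G_def by (rule per_N(3)[OF _ n_pos hN JpN JmN A1N])
  have Tpos: "N \<ge> 2 \<Longrightarrow> T N > 0" for N by (rule PN1)
  have ev2: "\<forall>\<^sub>F N in sequentially. N \<ge> 2" by (rule eventually_ge_at_top)
  define kmax where "kmax N = (SOME k. k \<in> {1..N^m N} \<and> (\<forall>k'\<in>{1..N^m N}. lowA3 N (m N) (J N) k' \<le> lowA3 N (m N) (J N) k))" for N
  have kmax: "kmax N \<in> {1..N^m N} \<and> (\<forall>k'\<in>{1..N^m N}. lowA3 N (m N) (J N) k' \<le> lowA3 N (m N) (J N) (kmax N))" if "N \<ge> 2" for N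
  proof -
    have "{1..N^m N} \<noteq> {}" using that by simp
    hence "\<exists>k. k \<in> {1..N^m N} \<and> (\<forall>k'\<in>{1..N^m N}. lowA3 N (m N) (J N) k' \<le> lowA3 N (m N) (J N) k)"
      using exists_max_on[of "{1..N^m N}" "lowA3 N (m N) (J N)"] by auto
    thus ?thesis unfolding kmax_def by (rule someI_ex)
  qed
  have r2: "(\<lambda>N. A3_ratio N n (J N) (h N) (kmax N)) \<longlonglongrightarrow> 0"
  proof (rule A3[rule_format])
    fix N :: nat assume "N \<ge> 2"
    thus "1 \<le> kmax N \<and> kmax N \<le> N ^ m_hat N n (J N) (h N)" using kmax[of N] unfolding m_def by auto
  qed
  have r1: "(\<lambda>N. A3_ratio N n (J N) (h N) (N ^ m N)) \<longlonglongrightarrow> 0"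
  proof -
    have "(\<lambda>N. A3_ratio N n (J N) (h N) (N ^ m_hat N n (J N) (h N))) \<longlonglongrightarrow> 0"
      by (rule A3[rule_format]) simp
    thus ?thesis unfolding m_def .
  qed
  have up: "\<forall>\<^sub>F N in sequentially. e N \<le> A3_ratio N n (J N) (h N) (kmax N)"
    using ev2
  proof eventually_elim
    case (elim N)
    have "G N / T N \<le> 1 + A3_ratio N n (J N) (h N) (kmax N)"
      using PN2[OF elim, of "kmax N"] kmax[OF elim] by auto
    thus ?case unfolding e_def by simp
  qed
  have lt1: "\<forall>\<^sub>F N in sequentially. A3_ratio N n (J N) (h N) (N ^ m N) < 1"
    using r1 by (rule order_tendstoD) simp
  have lo: "\<forall>\<^sub>F N in sequentially. (1 - A3_ratio N n (J N) (h N) (N ^ m N)) / (1 + A3_ratio N n (J N) (h N) (N ^ m N) / 2)^2 - 1 \<le> e N"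
    using ev2 lt1
  proof eventually_elim
    case (elim N)
    have "G N / T N \<ge> (1 - A3_ratio N n (J N) (h N) (N ^ m N)) / (1 + A3_ratio N n (J N) (h N) (N ^ m N) / 2)^2"
      by (rule PN3[OF elim])
    thus ?case unfolding e_def by simp
  qed
  have lim_lo: "(\<lambda>N. (1 - A3_ratio N n (J N) (h N) (N ^ m N)) / (1 + A3_ratio N n (J N) (h N) (N ^ m N) / 2)^2 - 1) \<longlonglongrightarrow> 0"
  proof -
    have "(\<lambda>N. (1 - A3_ratio N n (J N) (h N) (N ^ m N)) / (1 + A3_ratio N n (J N) (h N) (N ^ m N) / 2)^2 - 1)
          \<longlonglongrightarrow> (1 - (0::real)) / (1 + (0::real) / 2)^2 - 1"
      by (intro tendsto_intros r1) auto
    thus ?thesis by simp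
  qed
  have "e \<longlonglongrightarrow> 0" by (rule tendsto_sandwich[OF lo up lim_lo r2])
  moreover have "\<forall>\<^sub>F N in sequentially.
              Gamma_star N n (J N) (h N) =
                (1 + e N) * (1/4) * inverse (J N (m_hat N n (J N) (h N) + 1)) *
                  ((\<Sum>i = m_hat N n (J N) (h N) + 1..n. J N i * real N ^ i) - h N) ^ 2"
    using ev2
  proof eventually_elim
    case (elim N)
    have "(1 + e N) * (1/4) * inverse (J N (m_hat N n (J N) (h N) + 1)) *
                  ((\<Sum>i = m_hat N n (J N) (h N) + 1..n. J N i * real N ^ i) - h N) ^ 2 = (1 + e N) * T N"
      unfolding T_def m_def by (simp add: mult.assoc)
    also have "\<dots> = G N" unfolding e_def using Tpos[OF elim] by simp
    finally show ?case unfolding G_def by simp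
  qed
  ultimately show ?thesis by blast
qed

end
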